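(* Let $R=\mathbb{F}_q+v\mathbb{F}_q+v^2\mathbb{F}_q$ with $v^3=v$, let $C$ be a linear code of length $n$ over $R$ and $C^\perp$ its dual. Then $\Psi(C)^\perp=\Psi(C^\perp)$, where $\Psi(C)^\perp$ is the dual of $\Psi(C)$ in $\mathbb{F}_q^{3n}$ with respect to the standard inner product. Moreover, if $C$ is self-dual, then $\Psi(C)$ is self-dual.
   Context: $q$ is a prime power and $R=\mathbb{F}_q[v]/\langle v^3-v\rangle$; every element of $R$ is uniquely $a_0+va_1+v^2a_2$ with $a_i\in\mathbb{F}_q$. A linear code of length $n$ over $R$ is an $R$-submodule of $R^n$. The Euclidean inner product on $R^n$ is $x\cdot y=\sum_{i=0}^{n-1}x_iy_i$; $C^\perp=\{x\in R^n: x\cdot y=0\ \forall y\in C\}$, and $C$ is self-dual if $C=C^\perp$. Every $c\in R^n$ can be written uniquely as $c=a_0+va_1+v^2a_2$ with $a_0,a_1,a_2\in\mathbb{F}_q^n$, and the Gray map $\Psi:R^n\to\mathbb{F}_q^{3n}$ is $\Psi(c)=(a_0,\ a_0+a_2,\ a_1)$. *)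

theory Defs
  imports Main
begin

text \<open>The ring R = F_q[v]/(v^3 - v).  An element a0 + v a1 + v^2 a2 is represented
  by the triple (a0, a1, a2) over a finite field 'a (= F_q).\<close>

type_synonym 'a R = "'a \<times> 'a \<times> 'a"

definition R_zero :: "'a::field R" where
  "R_zero = (0, 0, 0)"

definition R_add :: "'a::field R \<Rightarrow> 'a R \<Rightarrow> 'a R" where
  "R_add x y = (case x of (a0, a1, a2) \<Rightarrow> case y of (b0, b1, b2) \<Rightarrow>
      (a0 + b0, a1 + b1, a2 + b2))"

text \<open>Multiplication using v^3 = v (hence v^4 = v^2).\<close>
definition R_mul :: "'a::field R \<Rightarrow> 'a R \<Rightarrow> 'a R" where
  "R_mul x y = (case x of (a0, a1, a2) \<Rightarrow> case y of (b0, b1, b2) \<Rightarrow>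
      (a0 * b0,
       a0 * b1 + a1 * b0 + a1 * b2 + a2 * b1,
       a0 * b2 + a1 * b1 + a2 * b0 + a2 * b2))"

text \<open>Vectors of length n are functions nat => _ vanishing from index n on.\<close>
definition Rvecs :: "nat \<Rightarrow> (nat \<Rightarrow> 'a::field R) set" where
  "Rvecs n = {x. \<forall>i\<ge>n. x i = R_zero}"

definition Fvecs :: "nat \<Rightarrow> (nat \<Rightarrow> 'a::field) set" where
  "Fvecs m = {x. \<forall>i\<ge>m. x i = 0}"

definition R_linear_code :: "nat \<Rightarrow> (nat \<Rightarrow> 'a::field R) set \<Rightarrow> bool" where
  "R_linear_code n C \<longleftrightarrow> C \<subseteq> Rvecs n \<and> (\<lambda>i. R_zero) \<in> C
     \<and> (\<forall>x\<in>C. \<forall>y\<in>C. (\<lambda>i. R_add (x i) (y i)) \<in> C)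
     \<and> (\<forall>r. \<forall>x\<in>C. (\<lambda>i. R_mul r (x i)) \<in> C)"

fun R_sum :: "nat \<Rightarrow> (nat \<Rightarrow> 'a::field R) \<Rightarrow> 'a R" where
  "R_sum 0 f = R_zero"
| "R_sum (Suc k) f = R_add (R_sum k f) (f k)"

definition R_inner :: "nat \<Rightarrow> (nat \<Rightarrow> 'a::field R) \<Rightarrow> (nat \<Rightarrow> 'a R) \<Rightarrow> 'a R" where
  "R_inner n x y = R_sum n (\<lambda>i. R_mul (x i) (y i))"

definition R_dual :: "nat \<Rightarrow> (nat \<Rightarrow> 'a::field R) set \<Rightarrow> (nat \<Rightarrow> 'a R) set" where
  "R_dual n C = {x \<in> Rvecs n. \<forall>y\<in>C. R_inner n x y = R_zero}"

definition F_dual :: "nat \<Rightarrow> (nat \<Rightarrow> 'a::field) set \<Rightarrow> (nat \<Rightarrow> 'a) set" where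
  "F_dual m D = {x \<in> Fvecs m. \<forall>y\<in>D. (\<Sum>i<m. x i * y i) = 0}"

definition Psi :: "nat \<Rightarrow> (nat \<Rightarrow> 'a::field R) \<Rightarrow> (nat \<Rightarrow> 'a)" where
  "Psi n c = (\<lambda>j. if j < n then fst (c j)
                 else if j < 2 * n then fst (c (j - n)) + snd (snd (c (j - n)))
                 else if j < 3 * n then fst (snd (c (j - 2 * n)))
                 else 0)"

end

theory Submission
  imports Defs
begin

lemma R_sum_comp:
  "R_sum k f = ((\<Sum>i<k. fst (f i)), (\<Sum>i<k. fst (snd (f i))), (\<Sum>i<k. snd (snd (f i))))"
  by (induction k) (auto simp: R_zero_def R_add_def split: prod.splits)

lemma R_mul_comp:
  "R_mul a b = (fst a*fst b,
     fst a*fst(snd b) + fst(snd a)*fst b + fst(snd a)*snd(snd b) + snd(snd a)*fst(snd b),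
     fst a*snd(snd b) + fst(snd a)*fst(snd b) + snd(snd a)*fst b + snd(snd a)*snd(snd b))"
  by (cases a; cases b) (simp add: R_mul_def)

lemma sum3:
  fixes f :: "nat \<Rightarrow> 'a::comm_monoid_add"
  shows "(\<Sum>j<3*n. f j) = (\<Sum>i<n. f i + f (i+n) + f (i+2*n))"
proof -
  have a: "(\<Sum>j<3*n. f j) = sum f {0..<n} + sum f {n..<2*n} + sum f {2*n..<3*n}"
    by (simp add: lessThan_atLeast0 sum.atLeastLessThan_concat)
  have b: "sum f {n..<2*n} = (\<Sum>i<n. f (i+n))"
    using sum.shift_bounds_nat_ivl[of f 0 n n] by (simp add: lessThan_atLeast0 mult_2)
  have c: "sum f {2*n..<3*n} = (\<Sum>i<n. f (i+2*n))"
    using sum.shift_bounds_nat_ivl[of f 0 "2*n" n] by (simp add: lessThan_atLeast0 algebra_simps)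
  show ?thesis using a b c by (simp add: lessThan_atLeast0 sum.distrib)
qed

definition tau :: "'a::field R \<Rightarrow> 'a" where
  "tau s = 2 * fst s + snd (snd s)"

lemma Psi0: "i < n \<Longrightarrow> Psi n x i = fst (x i)" by (simp add: Psi_def)
lemma Psi1: "i < n \<Longrightarrow> Psi n x (i+n) = fst (x i) + snd (snd (x i))" by (simp add: Psi_def)
lemma Psi2: "i < n \<Longrightarrow> Psi n x (i+2*n) = fst (snd (x i))" by (simp add: Psi_def)

lemma Psi_inner:
  fixes x y :: "nat \<Rightarrow> 'a::field R"
  shows "(\<Sum>j<3*n. Psi n x j * Psi n y j) = tau (R_inner n x y)"
proof -
  have "(\<Sum>j<3*n. Psi n x j * Psi n y j) =
     (\<Sum>i<n. 2 * (fst (x i) * fst (y i)) +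
     (fst (x i) * snd (snd (y i)) + fst (snd (x i)) * fst (snd (y i)) + snd (snd (x i)) * fst (y i)
       + snd (snd (x i)) * snd (snd (y i))))"
    unfolding sum3
  proof (rule sum.cong[OF refl])
    fix i assume "i \<in> {..<n}"
    then have i: "i < n" by simp
    show "Psi n x i * Psi n y i + Psi n x (i + n) * Psi n y (i + n) + Psi n x (i + 2 * n) * Psi n y (i + 2 * n) =
     2 * (fst (x i) * fst (y i)) +
     (fst (x i) * snd (snd (y i)) + fst (snd (x i)) * fst (snd (y i)) + snd (snd (x i)) * fst (y i)
       + snd (snd (x i)) * snd (snd (y i)))"
      unfolding Psi0[OF i] Psi1[OF i] Psi2[OF i] by algebra
  qed
  also have "\<dots> = tau (R_inner n x y)"
    unfolding tau_def R_inner_def R_sum_comp R_mul_comp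
    by (simp add: sum.distrib sum_distrib_left)
  finally show ?thesis .
qed

lemma inner_scal:
  "R_inner n x (\<lambda>i. R_mul r (y i)) = R_mul r (R_inner n x y)"
  unfolding R_inner_def R_sum_comp R_mul_comp
  by (simp add: sum.distrib sum_distrib_left algebra_simps)

lemma tau_zero: "tau R_zero = 0"
  by (simp add: tau_def R_zero_def)

lemma tau_gen:
  fixes s :: "'a::field R"
  assumes "tau (R_mul (1,0,0) s) = 0" "tau (R_mul (0,1,0) s) = 0" "tau (R_mul (0,0,1) s) = 0"
  shows "s = R_zero"
proof -
  obtain a b c where s: "s = (a,b,c)" by (cases s) auto
  have "2*a + c = 0" "b = 0" "a + c = 0"
    using assms by (auto simp: s tau_def R_mul_def)
  have "a = (2*a+c) - (a+c)" by algebra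
  then have a0: "a = 0" using \<open>2*a + c = 0\<close> \<open>a + c = 0\<close> by simp
  then have "c = 0" using \<open>a + c = 0\<close> by simp
  then show ?thesis using \<open>b = 0\<close> a0 by (simp add: s R_zero_def)
qed

theorem theorem6:
  fixes C :: "(nat \<Rightarrow> ('a::{field, finite}) R) set" and n :: nat
  assumes "R_linear_code n C"
  shows "F_dual (3 * n) (Psi n ` C) = Psi n ` R_dual n C
         \<and> (R_dual n C = C \<longrightarrow> F_dual (3 * n) (Psi n ` C) = Psi n ` C)"
proof -
  have scal: "\<And>r y. y \<in> C \<Longrightarrow> (\<lambda>i. R_mul r (y i)) \<in> C"
    using assms unfolding R_linear_code_def by blast
  have PF: "\<And>x. Psi n x \<in> Fvecs (3*n)" by (simp add: Psi_def Fvecs_def)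
  have eq: "F_dual (3 * n) (Psi n ` C) = Psi n ` R_dual n C"
  proof
    show "Psi n ` R_dual n C \<subseteq> F_dual (3 * n) (Psi n ` C)"
      using PF by (auto simp: F_dual_def R_dual_def Psi_inner tau_zero)
  next
    show "F_dual (3 * n) (Psi n ` C) \<subseteq> Psi n ` R_dual n C"
    proof
      fix z assume z: "z \<in> F_dual (3 * n) (Psi n ` C)"
      define x where "x = (\<lambda>i. if i < n then (z i, z (i+2*n), z (i+n) - z i) else (R_zero :: 'a R))"
      have zF: "\<And>j. j \<ge> 3*n \<Longrightarrow> z j = 0" using z by (auto simp: F_dual_def Fvecs_def)
      have "Psi n x = z"
      proof
        fix j show "Psi n x j = z j"
          using zF[of j] by (auto simp: Psi_def x_def)
      qed
      moreover have "x \<in> R_dual n C"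
        unfolding R_dual_def
      proof (intro CollectI conjI ballI)
        show "x \<in> Rvecs n" by (simp add: Rvecs_def x_def)
        fix y assume y: "y \<in> C"
        have h: "\<And>r. tau (R_mul r (R_inner n x y)) = 0"
        proof -
          fix r
          have "(\<lambda>i. R_mul r (y i)) \<in> C" using scal y .
          hence "(\<Sum>i<3*n. z i * Psi n (\<lambda>i. R_mul r (y i)) i) = 0"
            using z by (auto simp: F_dual_def)
          thus "tau (R_mul r (R_inner n x y)) = 0"
            using \<open>Psi n x = z\<close> Psi_inner[of n x "\<lambda>i. R_mul r (y i)"] by (simp add: inner_scal)
        qed
        show "R_inner n x y = R_zero" by (rule tau_gen) (rule h)+
      qed
      ultimately show "z \<in> Psi n ` R_dual n C" by blast
    qed
  qed
  show ?thesis using eq by simp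
qed

end
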